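(* Let $\Gamma$ be a simple, undirected, connected graph with order $p\ge 2$, maximum degree $\Delta$ and domination number $\gamma(\Gamma)$. Then $$\gamma_{[3R]}(\Gamma)\ge\left\lceil\frac{2p+(\Delta-1)\gamma(\Gamma)}{\Delta}\right\rceil.$$ Moreover, this bound holds with equality for every such graph having a vertex adjacent to all other vertices.
   Context: $\gamma(\Gamma)$ is the minimum size of a set $S$ of vertices such that every vertex outside $S$ has a neighbour in $S$. For $h:V\to\{0,1,2,3,4\}$, let $AN(v)=\{w\in N(v):h(w)\ge 1\}$, $AN[v]=AN(v)\cup\{v\}$ and $h(S)=\sum_{u\in S}h(u)$; $h$ is a triple Roman dominating function (3RDF) if every $v$ with $h(v)<3$ satisfies $h(AN[v])\ge|AN(v)|+3$, and $\gamma_{[3R]}(\Gamma)$ is the minimum weight $h(V)$ of a 3RDF. *)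

theory Defs
  imports Main Complex_Main
begin

definition simple_graph :: "'a set \<Rightarrow> ('a \<Rightarrow> 'a \<Rightarrow> bool) \<Rightarrow> bool" where
  "simple_graph V E \<longleftrightarrow> finite V
     \<and> (\<forall>u v. E u v \<longrightarrow> u \<in> V \<and> v \<in> V)
     \<and> (\<forall>u v. E u v \<longrightarrow> E v u)
     \<and> (\<forall>v. \<not> E v v)"

definition connected_graph :: "'a set \<Rightarrow> ('a \<Rightarrow> 'a \<Rightarrow> bool) \<Rightarrow> bool" where
  "connected_graph V E \<longleftrightarrow> (\<forall>u\<in>V. \<forall>v\<in>V. E\<^sup>*\<^sup>* u v)"

definition nbhd :: "'a set \<Rightarrow> ('a \<Rightarrow> 'a \<Rightarrow> bool) \<Rightarrow> 'a \<Rightarrow> 'a set" where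
  "nbhd V E v = {w \<in> V. E v w}"

definition degree :: "'a set \<Rightarrow> ('a \<Rightarrow> 'a \<Rightarrow> bool) \<Rightarrow> 'a \<Rightarrow> nat" where
  "degree V E v = card (nbhd V E v)"

definition max_degree :: "'a set \<Rightarrow> ('a \<Rightarrow> 'a \<Rightarrow> bool) \<Rightarrow> nat" where
  "max_degree V E = Max (degree V E ` V)"

definition dominating_set :: "'a set \<Rightarrow> ('a \<Rightarrow> 'a \<Rightarrow> bool) \<Rightarrow> 'a set \<Rightarrow> bool" where
  "dominating_set V E S \<longleftrightarrow> S \<subseteq> V \<and> (\<forall>v \<in> V - S. \<exists>u \<in> S. E v u)"

definition domination_number :: "'a set \<Rightarrow> ('a \<Rightarrow> 'a \<Rightarrow> bool) \<Rightarrow> nat" where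
  "domination_number V E = Min (card ` {S. dominating_set V E S})"

definition active_nbhd :: "'a set \<Rightarrow> ('a \<Rightarrow> 'a \<Rightarrow> bool) \<Rightarrow> ('a \<Rightarrow> nat) \<Rightarrow> 'a \<Rightarrow> 'a set" where
  "active_nbhd V E h v = {w \<in> nbhd V E v. h w \<ge> 1}"

definition triple_roman_dom :: "'a set \<Rightarrow> ('a \<Rightarrow> 'a \<Rightarrow> bool) \<Rightarrow> ('a \<Rightarrow> nat) \<Rightarrow> bool" where
  "triple_roman_dom V E h \<longleftrightarrow>
     (\<forall>v \<in> V. h v \<le> 4) \<and> (\<forall>v. v \<notin> V \<longrightarrow> h v = 0) \<and>
     (\<forall>v \<in> V. h v < 3 \<longrightarrow>
        sum h (insert v (active_nbhd V E h v)) \<ge> card (active_nbhd V E h v) + 3)"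

definition weight :: "'a set \<Rightarrow> ('a \<Rightarrow> nat) \<Rightarrow> nat" where
  "weight V h = sum h V"

definition triple_roman_dom_number :: "'a set \<Rightarrow> ('a \<Rightarrow> 'a \<Rightarrow> bool) \<Rightarrow> nat" where
  "triple_roman_dom_number V E = Min (weight V ` {h. triple_roman_dom V E h})"

end

theory Submission
  imports Defs
begin

lemma sg_fin: "simple_graph V E \<Longrightarrow> finite V"
  by (simp add: simple_graph_def)
lemma sg_in: "simple_graph V E \<Longrightarrow> E u v \<Longrightarrow> u \<in> V \<and> v \<in> V"
  by (simp add: simple_graph_def)
lemma sg_sym: "simple_graph V E \<Longrightarrow> E u v \<Longrightarrow> E v u"
  by (simp add: simple_graph_def)
lemma sg_irr: "simple_graph V E \<Longrightarrow> \<not> E v v"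
  by (simp add: simple_graph_def)

lemma main_ineq:
  assumes G: "simple_graph V E" and T: "triple_roman_dom V E h" and D2: "\<Delta> \<ge> 2"
    and Dg: "\<forall>v\<in>V. degree V E v \<le> \<Delta>"
  shows "3 * \<Delta> * weight V h \<ge> 6 * card V + 3 * (\<Delta> - 1) * card {v\<in>V. h v \<ge> 1}"
proof -
  have fin: "finite V" using G sg_fin by blast
  define f where "f v = (\<Sum>u\<in>V. if E v u then h u - 1 else 0)" for v
  have A: "f v + h v \<ge> 3" if vV: "v \<in> V" and hv: "h v < 3" for v
  proof -
    define AN where "AN = active_nbhd V E h v"
    have ANV: "AN \<subseteq> V" unfolding AN_def active_nbhd_def nbhd_def by auto
    have finAN: "finite AN" using ANV fin finite_subset by blast
    have vAN: "v \<notin> AN" unfolding AN_def active_nbhd_def nbhd_def using sg_irr[OF G] by auto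
    have c: "sum h (insert v AN) \<ge> card AN + 3" using T vV hv unfolding triple_roman_dom_def AN_def by auto
    have s1: "sum h (insert v AN) = h v + sum h AN" using finAN vAN by simp
    have s2: "sum h AN = (\<Sum>u\<in>AN. h u - 1) + card AN"
    proof -
      have "sum h AN = (\<Sum>u\<in>AN. (h u - 1) + 1)"
        by (rule sum.cong) (auto simp: AN_def active_nbhd_def)
      also have "\<dots> = (\<Sum>u\<in>AN. h u - 1) + card AN" unfolding sum.distrib by simp
      finally show ?thesis .
    qed
    have s3: "f v = (\<Sum>u\<in>AN. h u - 1)"
    proof -
      have "f v = (\<Sum>u\<in>V. if u \<in> AN then h u - 1 else 0)"
        unfolding f_def by (rule sum.cong) (auto simp: AN_def active_nbhd_def nbhd_def)
      also have "\<dots> = (\<Sum>u\<in>V \<inter> AN. h u - 1)"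
        by (rule sum.inter_restrict[OF fin, symmetric])
      also have "V \<inter> AN = AN" using ANV by blast
      finally show ?thesis .
    qed
    show ?thesis using c s1 s2 s3 by linarith
  qed
  have B: "(\<Sum>v\<in>V. if h v < 3 then f v else 0) \<le> \<Delta> * (\<Sum>u\<in>V. h u - 1)"
  proof -
    have "(\<Sum>v\<in>V. if h v < 3 then f v else 0)
        = (\<Sum>v\<in>V. \<Sum>u\<in>V. if h v < 3 \<and> E v u then h u - 1 else 0)"
      unfolding f_def by (rule sum.cong) auto
    also have "\<dots> = (\<Sum>u\<in>V. \<Sum>v\<in>V. if h v < 3 \<and> E v u then h u - 1 else 0)"
      by (rule sum.swap)
    also have "\<dots> \<le> (\<Sum>u\<in>V. (h u - 1) * \<Delta>)"
    proof (rule sum_mono)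
      fix u assume uV: "u \<in> V"
      have "(\<Sum>v\<in>V. if h v < 3 \<and> E v u then h u - 1 else 0)
          = (h u - 1) * (\<Sum>v\<in>V. if h v < 3 \<and> E v u then 1 else 0)"
        by (simp add: sum_distrib_left if_distrib cong: if_cong)
      also have "(\<Sum>v\<in>V. if h v < 3 \<and> E v u then 1 else (0::nat)) \<le> (\<Sum>v\<in>V. if E u v then 1 else 0)"
        by (rule sum_mono) (auto dest: sg_sym[OF G])
      also have "(\<Sum>v\<in>V. if E u v then 1 else (0::nat)) = card (nbhd V E u)"
        unfolding nbhd_def using fin by (simp add: sum.If_cases Int_def)
      also have "\<dots> \<le> \<Delta>" using Dg uV unfolding degree_def by auto
      finally show "(\<Sum>v\<in>V. if h v < 3 \<and> E v u then h u - 1 else 0) \<le> (h u - 1) * \<Delta>"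
        by simp
    qed
    also have "\<dots> = \<Delta> * (\<Sum>u\<in>V. h u - 1)" by (simp only: sum_distrib_left mult.commute)
    finally show ?thesis .
  qed
  have cardS: "card {v\<in>V. h v \<ge> 1} = (\<Sum>v\<in>V. if h v \<ge> 1 then 1 else 0)"
    using fin by (simp add: sum.If_cases Int_def)
  have C: "weight V h = (\<Sum>u\<in>V. h u - 1) + card {v\<in>V. h v \<ge> 1}"
  proof -
    have "weight V h = (\<Sum>u\<in>V. (h u - 1) + (if h u \<ge> 1 then 1 else 0))"
      unfolding weight_def by (rule sum.cong) auto
    then show ?thesis using cardS by (simp add: sum.distrib)
  qed
  have "6 * card V + 3 * (\<Delta> - 1) * card {v\<in>V. h v \<ge> 1}
      = (\<Sum>v\<in>V. 6 + 3 * (\<Delta> - 1) * (if h v \<ge> 1 then 1 else 0))"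
    using cardS by (simp add: sum.distrib sum_distrib_left)
  also have "\<dots> \<le> (\<Sum>v\<in>V. 2 * (if h v < 3 then f v else 0) + 2 * \<Delta> * (if h v \<ge> 1 then 1 else 0) + \<Delta> * h v)"
  proof (rule sum_mono)
    fix v assume vV: "v \<in> V"
    have h4: "h v \<le> 4" using T vV unfolding triple_roman_dom_def by auto
    show "6 + 3 * (\<Delta> - 1) * (if h v \<ge> 1 then 1 else 0)
        \<le> 2 * (if h v < 3 then f v else 0) + 2 * \<Delta> * (if h v \<ge> 1 then 1 else 0) + \<Delta> * h v"
    proof (cases "h v < 3")
      case True
      with A[OF vV] have "f v + h v \<ge> 3" by auto
      moreover have "h v = 0 \<or> h v = 1 \<or> h v = 2" using True by auto
      ultimately show ?thesis using True D2 by auto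
    next
      case False
      then have "h v = 3 \<or> h v = 4" using h4 by auto
      then show ?thesis using D2 by auto
    qed
  qed
  also have "\<dots> = 2 * (\<Sum>v\<in>V. if h v < 3 then f v else 0) + 2 * \<Delta> * card {v\<in>V. h v \<ge> 1} + \<Delta> * weight V h"
    using cardS by (simp add: sum.distrib sum_distrib_left weight_def)
  also have "\<dots> \<le> 2 * (\<Delta> * (\<Sum>u\<in>V. h u - 1)) + 2 * \<Delta> * card {v\<in>V. h v \<ge> 1} + \<Delta> * weight V h"
    using B by linarith
  also have "\<dots> = 3 * \<Delta> * weight V h" using C by (simp add: algebra_simps)
  finally show ?thesis .
qed


lemma w_ge4:
  assumes G: "simple_graph V E" and T: "triple_roman_dom V E h"
    and ab: "a \<in> V" "b \<in> V" "a \<noteq> b"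
  shows "weight V h \<ge> 4"
proof -
  have fin: "finite V" using G sg_fin by blast
  have low: "weight V h \<ge> 4" if vV: "v \<in> V" and hv: "h v < 3" for v
  proof -
    define AN where "AN = active_nbhd V E h v"
    have ANV: "AN \<subseteq> V" unfolding AN_def active_nbhd_def nbhd_def by auto
    have finAN: "finite AN" using ANV fin finite_subset by blast
    have vAN: "v \<notin> AN" unfolding AN_def active_nbhd_def nbhd_def using sg_irr[OF G] by auto
    have c: "sum h (insert v AN) \<ge> card AN + 3" using T vV hv unfolding triple_roman_dom_def AN_def by auto
    have ne: "AN \<noteq> {}"
    proof
      assume "AN = {}"
      then show False using c hv by simp
    qed
    then have "card AN \<ge> 1" using finAN by (simp add: Suc_le_eq card_gt_0_iff)
    moreover have "sum h (insert v AN) \<le> sum h V"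
      by (rule sum_mono2[OF fin]) (use ANV vV in auto)
    ultimately show ?thesis using c unfolding weight_def by linarith
  qed
  show ?thesis
  proof (cases "h a < 3 \<or> h b < 3")
    case True then show ?thesis using low ab by blast
  next
    case False
    have "sum h {a, b} \<le> sum h V" by (rule sum_mono2[OF fin]) (use ab in auto)
    then show ?thesis using False ab unfolding weight_def by simp
  qed
qed

lemma has_nb:
  assumes C: "connected_graph V E" and ab: "a \<in> V" "b \<in> V" "a \<noteq> b"
  shows "\<exists>y. E a y"
proof -
  have "E\<^sup>*\<^sup>* a b" using C ab unfolding connected_graph_def by blast
  then show ?thesis using ab(3) by (cases rule: converse_rtranclpE) auto
qed

lemma two_of_two:
  assumes G: "simple_graph V E" and C: "connected_graph V E"
    and a: "a \<in> V" and eab: "E a b"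
    and Dg: "\<forall>v\<in>V. degree V E v \<le> 1"
  shows "V \<subseteq> {a, b}"
proof
  fix c assume cV: "c \<in> V"
  have fin: "finite V" using G sg_fin by blast
  have uniq: "z = w" if "x \<in> V" "E x z" "E x w" for x z w
  proof -
    have "z \<in> nbhd V E x" "w \<in> nbhd V E x" using that sg_in[OF G] unfolding nbhd_def by auto
    moreover have "finite (nbhd V E x)" using fin unfolding nbhd_def by simp
    moreover have "card (nbhd V E x) \<le> 1" using Dg that(1) unfolding degree_def by auto
    ultimately show ?thesis by (metis card_le_Suc0_iff_eq One_nat_def)
  qed
  have "E\<^sup>*\<^sup>* a c" using C a cV unfolding connected_graph_def by blast
  then show "c \<in> {a, b}"
  proof (induction rule: rtranclp_induct)
    case base then show ?case by simp
  next
    case (step y z)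
    show ?case
    proof (cases "y = a")
      case True then show ?thesis using uniq[OF a eab] step by auto
    next
      case False
      then have yb: "y = b" using step by auto
      have "b \<in> V" using sg_in[OF G eab] by blast
      moreover have "E b a" using sg_sym[OF G eab] .
      ultimately show ?thesis using uniq step yb by blast
    qed
  qed
qed

theorem proposition19:
  fixes V :: "'a set" and E :: "'a \<Rightarrow> 'a \<Rightarrow> bool"
  assumes "simple_graph V E" and "connected_graph V E" and "card V \<ge> 2"
  shows "real (triple_roman_dom_number V E) \<ge>
           of_int \<lceil>(2 * real (card V) + (real (max_degree V E) - 1) * real (domination_number V E))
                   / real (max_degree V E)\<rceil>
         \<and> ((\<exists>u \<in> V. \<forall>v \<in> V - {u}. E u v) \<longrightarrow>
         real (triple_roman_dom_number V E) =
           of_int \<lceil>(2 * real (card V) + (real (max_degree V E) - 1) * real (domination_number V E))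
                   / real (max_degree V E)\<rceil>)"
proof -
  note G = assms(1) and C = assms(2)
  have fin: "finite V" using G sg_fin by blast
  obtain a b where ab: "a \<in> V" "b \<in> V" "a \<noteq> b"
  proof -
    have "\<not> card V \<le> Suc 0" using assms(3) by simp
    then have "\<not> (\<forall>a\<in>V. \<forall>b\<in>V. a = b)" using card_le_Suc0_iff_eq[OF fin] by blast
    then show ?thesis using that by blast
  qed
  define \<Delta> where "\<Delta> = max_degree V E"
  have Dg: "\<forall>v\<in>V. degree V E v \<le> \<Delta>"
    unfolding \<Delta>_def max_degree_def using fin by auto
  obtain y where ey: "E a y" using has_nb[OF C ab] by blast
  have "degree V E a \<ge> 1"
  proof -
    have "y \<in> nbhd V E a" using ey sg_in[OF G ey] unfolding nbhd_def by auto
    moreover have "finite (nbhd V E a)" using fin unfolding nbhd_def by simp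
    ultimately show ?thesis unfolding degree_def by (metis One_nat_def Suc_leI card_gt_0_iff empty_iff)
  qed
  then have D1: "\<Delta> \<ge> 1" using Dg ab by fastforce
  define R where "R = {h. triple_roman_dom V E h}"
  define h4 where "h4 = (\<lambda>v. if v \<in> V then (4::nat) else 0)"
  have h4R: "h4 \<in> R" unfolding R_def triple_roman_dom_def h4_def by auto
  have Rbd: "weight V ` R \<subseteq> {..4 * card V}"
  proof
    fix x assume "x \<in> weight V ` R"
    then obtain h where h: "triple_roman_dom V E h" "x = weight V h" unfolding R_def by auto
    have "sum h V \<le> sum (\<lambda>_. 4) V" by (rule sum_mono) (use h(1) in \<open>auto simp: triple_roman_dom_def\<close>)
    then show "x \<in> {..4 * card V}" using h(2) unfolding weight_def by simp
  qed
  have finR: "finite (weight V ` R)" using Rbd finite_subset by blast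
  have "triple_roman_dom_number V E \<in> weight V ` R"
    unfolding triple_roman_dom_number_def R_def[symmetric] using finR h4R by (intro Min_in) auto
  then obtain h where hT: "triple_roman_dom V E h" and hw: "triple_roman_dom_number V E = weight V h"
    unfolding R_def by auto
  define w where "w = weight V h"
  define DS where "DS = {S. dominating_set V E S}"
  have Sdom: "dominating_set V E {v\<in>V. h v \<ge> 1}"
    unfolding dominating_set_def
  proof (intro conjI ballI)
    fix v assume v: "v \<in> V - {v \<in> V. 1 \<le> h v}"
    then have v0: "h v = 0" "v \<in> V" by auto
    define AN where "AN = active_nbhd V E h v"
    have c: "sum h (insert v AN) \<ge> card AN + 3" using hT v0 unfolding triple_roman_dom_def AN_def by auto
    have "AN \<noteq> {}"
    proof
      assume "AN = {}" then show False using c v0 by simp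
    qed
    then obtain u where "u \<in> AN" by blast
    then show "\<exists>u\<in>{v \<in> V. 1 \<le> h v}. E v u" unfolding AN_def active_nbhd_def nbhd_def by auto
  qed auto
  have DSbd: "card ` DS \<subseteq> {..card V}"
    unfolding DS_def dominating_set_def using fin by (auto intro: card_mono)
  have finDS: "finite (card ` DS)" using DSbd finite_subset by blast
  have gle: "domination_number V E \<le> card {v\<in>V. h v \<ge> 1}"
    unfolding domination_number_def DS_def[symmetric] using finDS Sdom unfolding DS_def
    by (intro Min_le) auto
  define g where "g = domination_number V E"
  have w4: "w \<ge> 4" using w_ge4[OF G hT ab] unfolding w_def .
  have key: "\<Delta> * w \<ge> 2 * card V + (\<Delta> - 1) * g"
  proof (cases "\<Delta> \<ge> 2")
    case True
    have "3 * \<Delta> * w \<ge> 6 * card V + 3 * (\<Delta> - 1) * card {v\<in>V. h v \<ge> 1}"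
      using main_ineq[OF G hT True Dg] unfolding w_def .
    moreover have "(\<Delta> - 1) * g \<le> (\<Delta> - 1) * card {v\<in>V. h v \<ge> 1}"
      using gle unfolding g_def by simp
    ultimately show ?thesis by linarith
  next
    case False
    then have D: "\<Delta> = 1" using D1 by simp
    have "V \<subseteq> {a, y}" using two_of_two[OF G C ab(1) ey] Dg D by simp
    then have "card V \<le> card {a, y}" by (intro card_mono) auto
    also have "card {a, y} \<le> 2" by (simp add: card_insert_if)
    finally have "card V \<le> 2" .
    then show ?thesis using D w4 by simp
  qed
  have realkey: "(2 * real (card V) + (real \<Delta> - 1) * real g) / real \<Delta> \<le> real w"
  proof -
    have "real (\<Delta> * w) \<ge> real (2 * card V + (\<Delta> - 1) * g)" using key by linarith
    then have "real \<Delta> * real w \<ge> 2 * real (card V) + (real \<Delta> - 1) * real g"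
      using D1 by (simp add: of_nat_diff)
    then show ?thesis using D1 by (simp add: divide_le_eq mult.commute)
  qed
  have part1: "real (triple_roman_dom_number V E) \<ge>
           of_int \<lceil>(2 * real (card V) + (real (max_degree V E) - 1) * real (domination_number V E))
                   / real (max_degree V E)\<rceil>"
    using realkey unfolding hw w_def[symmetric] \<Delta>_def[symmetric] g_def[symmetric]
    by (metis ceiling_le_iff ceiling_of_nat of_int_of_nat_eq of_int_le_iff)
  show ?thesis
  proof (intro conjI impI part1)
    assume "\<exists>u\<in>V. \<forall>v\<in>V - {u}. E u v"
    then obtain u where uV: "u \<in> V" and uni: "\<forall>v\<in>V - {u}. E u v" by blast
    have nbu: "nbhd V E u = V - {u}" using uni sg_irr[OF G] unfolding nbhd_def by auto
    have degu: "degree V E u = card V - 1" unfolding degree_def nbu using fin uV by simp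
    have degle: "degree V E v \<le> card V - 1" if "v \<in> V" for v
    proof -
      have "nbhd V E v \<subseteq> V - {v}" using sg_irr[OF G] unfolding nbhd_def by auto
      then have "card (nbhd V E v) \<le> card (V - {v})" using fin by (intro card_mono) auto
      then show ?thesis unfolding degree_def using that fin by simp
    qed
    have DD: "\<Delta> = card V - 1"
      using degu degle uV Dg unfolding \<Delta>_def max_degree_def
      by (metis (no_types, lifting) Max_eqI fin finite_imageI imageE imageI)
    have g1: "g = 1"
    proof -
      have "dominating_set V E {u}" unfolding dominating_set_def using uV uni sg_sym[OF G] by auto
      then have "card {u} \<in> card ` DS" unfolding DS_def by blast
      then have "g \<le> card {u}" unfolding g_def domination_number_def DS_def[symmetric]
        using finDS by (intro Min_le) auto
      moreover have "g \<in> card ` DS" unfolding g_def domination_number_def DS_def[symmetric]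
        using finDS Sdom unfolding DS_def by (intro Min_in) auto
      then obtain S where "dominating_set V E S" "g = card S" unfolding DS_def by auto
      then have "g \<noteq> 0" using fin ab unfolding dominating_set_def
        by (metis Diff_empty card_0_eq empty_iff finite_subset)
      ultimately show ?thesis by simp
    qed
    define hu where "hu = (\<lambda>v. if v = u then (4::nat) else 0)"
    have huT: "triple_roman_dom V E hu"
      unfolding triple_roman_dom_def
    proof (intro conjI ballI allI impI)
      fix v assume vV: "v \<in> V" and hv: "hu v < 3"
      then have vu: "v \<noteq> u" unfolding hu_def by auto
      have "E v u" using uni vV vu sg_sym[OF G] by auto
      then have AN: "active_nbhd V E hu v = {u}"
        unfolding active_nbhd_def nbhd_def hu_def using uV by auto
      show "card (active_nbhd V E hu v) + 3 \<le> sum hu (insert v (active_nbhd V E hu v))"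
        unfolding AN using vu by (simp add: hu_def)
    qed (auto simp: hu_def uV)
    have "weight V hu = 4" unfolding weight_def hu_def using fin uV
      by (simp add: sum.If_cases Int_def)
    then have "triple_roman_dom_number V E \<le> 4"
      unfolding triple_roman_dom_number_def R_def[symmetric] using finR huT
      by (metis Min_le R_def image_eqI mem_Collect_eq)
    then have w44: "w = 4" using w4 hw w_def by simp
    have p2: "real (card V) \<ge> 2" using assms(3) by simp
    have "\<lceil>(2 * real (card V) + (real \<Delta> - 1) * real g) / real \<Delta>\<rceil> = 4"
    proof -
      have rD: "real (card V) = real \<Delta> + 1" using DD assms(3) by (simp add: of_nat_diff)
      have pos: "real \<Delta> \<ge> 1" using D1 by simp
      have "(2 * real (card V) + (real \<Delta> - 1) * real g) / real \<Delta> = (3 * real \<Delta> + 1) / real \<Delta>"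
        using rD g1 by (simp add: algebra_simps)
      moreover have "(3 * real \<Delta> + 1) / real \<Delta> \<le> 4"
        using pos by (simp add: divide_le_eq)
      moreover have "(3 * real \<Delta> + 1) / real \<Delta> > 3"
        using pos by (simp add: less_divide_eq)
      ultimately show ?thesis by (simp only: ceiling_eq_iff) simp
    qed
    then show "real (triple_roman_dom_number V E) =
           of_int \<lceil>(2 * real (card V) + (real (max_degree V E) - 1) * real (domination_number V E))
                   / real (max_degree V E)\<rceil>"
      unfolding \<Delta>_def g_def using hw w_def w44 by simp
  qed
qed

end
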